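(* Let $G\in\mathbb{F}_q^{m\times n}$ have rank $m\le n$, and let $\mathcal{X}$ be a $k$-dimensional affine source over $\mathbb{F}_q^n$, i.e. uniform on $a+V$ for a $k$-dimensional subspace $V\subseteq\mathbb{F}_q^n$ and $a\in\mathbb{F}_q^n$, such that for $X\sim\mathcal{X}$ the distribution of $G\cdot X^\top$ has entropy at least $k'\log q$ (i.e., the linear map defined by $G$ is a $(k\log q)\to_0(k'\log q)$ condenser for $\mathcal{X}$). Let $H\in\mathbb{F}_q^{(n-m)\times n}$ have rank $n-m$ and satisfy $GH^\top=0$, and let $\mathcal{Y}$ be the $(n-k)$-dimensional affine source uniform on $b+V^\perp$ for some $b\in\mathbb{F}_q^n$, where $V^\perp=\{y\in\mathbb{F}_q^n: y\cdot v^\top=0\ \forall v\in V\}$. Then for $Y\sim\mathcal{Y}$, the distribution of $H\cdot Y^\top$ has entropy at least $(n-k+k'-m)\log q$.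
   Context: Logarithms are base 2. The image of an affine source under a linear map is uniform on an affine subspace, so its (Shannon and min-) entropy equals $\log_2$ of the size of that affine subspace. *)

theory Defs
  imports "HOL-Analysis.Analysis" "HOL-Probability.Probability_Mass_Function"
begin

definition shannon_entropy :: "'b pmf \<Rightarrow> real" where
  "shannon_entropy p = (\<Sum>x\<in>set_pmf p. - pmf p x * log 2 (pmf p x))"

definition dotp :: "'a::comm_ring^'n \<Rightarrow> 'a^'n \<Rightarrow> 'a" where
  "dotp y v = (\<Sum>i\<in>UNIV. y $ i * v $ i)"

definition perp :: "('a::comm_ring^'n) set \<Rightarrow> ('a^'n) set" where
  "perp V = {y. \<forall>v\<in>V. dotp y v = 0}"

definition affine_source :: "'a::{finite,ab_group_add}^'n \<Rightarrow> ('a^'n) set \<Rightarrow> ('a^'n) pmf" where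
  "affine_source a V = pmf_of_set ((\<lambda>v. a + v) ` V)"

end

theory Submission
  imports Defs
begin

lemma card_span_indep:
  fixes B :: "('a::{field,finite}^'n) set"
  assumes ind: "vec.independent B"
  shows "card (vec.span B) = CARD('a) ^ card B"
proof -
  have fin: "finite B" by simp
  let ?f = "\<lambda>u. \<Sum>v\<in>B. u v *s v"
  have sp: "vec.span B = ?f ` (PiE B (\<lambda>_. UNIV))"
  proof -
    have "vec.span B = range ?f" using vec.span_finite[OF fin] .
    also have "\<dots> = ?f ` (PiE B (\<lambda>_. UNIV))"
    proof
      show "range ?f \<subseteq> ?f ` (PiE B (\<lambda>_. UNIV))"
      proof
        fix x assume "x \<in> range ?f"
        then obtain u where x: "x = ?f u" by auto
        have "?f u = ?f (restrict u B)" by (intro sum.cong) auto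
        moreover have "restrict u B \<in> PiE B (\<lambda>_. UNIV)" by auto
        ultimately show "x \<in> ?f ` (PiE B (\<lambda>_. UNIV))" using x by blast
      qed
    qed auto
    finally show ?thesis .
  qed
  have inj: "inj_on ?f (PiE B (\<lambda>_. UNIV))"
  proof (rule inj_onI)
    fix u w assume u: "u \<in> PiE B (\<lambda>_. UNIV)" and w: "w \<in> PiE B (\<lambda>_. UNIV)" and eq: "?f u = ?f w"
    have "(\<Sum>v\<in>B. (u v - w v) *s v) = 0"
      using eq by (simp only: vec.scale_left_diff_distrib sum_subtractf diff_self)
    moreover have h: "\<forall>c. (\<Sum>v\<in>B. c v *s v) = 0 \<longrightarrow> (\<forall>v\<in>B. c v = 0)"
      using ind unfolding vec.independent_explicit by blast
    ultimately have "\<forall>v\<in>B. u v - w v = 0"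
      using h[rule_format, of "\<lambda>v. u v - w v"] by simp
    then show "u = w" using u w by (auto intro: PiE_ext)
  qed
  have "card (vec.span B) = card (PiE B (\<lambda>_. UNIV::'a set))"
    using sp card_image[OF inj] by simp
  also have "\<dots> = CARD('a) ^ card B" by (simp add: card_PiE fin)
  finally show ?thesis .
qed

lemma card_subspace:
  fixes S :: "('a::{field,finite}^'n) set"
  assumes "vec.subspace S"
  shows "card S = CARD('a) ^ vec.dim S"
proof -
  obtain B where B: "B \<subseteq> S" "vec.independent B" "S \<subseteq> vec.span B" "card B = vec.dim S"
    using vec.basis_exists by blast
  have "vec.span B = S" using B assms vec.span_minimal by blast
  then show ?thesis using card_span_indep[OF B(2)] B(4) by simp
qed

lemma map_pmf_uniform_fibers:
  assumes fin: "finite A" and ne: "A \<noteq> {}"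
    and fib: "\<And>y. y \<in> f`A \<Longrightarrow> card {x\<in>A. f x = y} = c"
  shows "card A = c * card (f`A)" "map_pmf f (pmf_of_set A) = pmf_of_set (f`A)"
proof -
  have U: "A = (\<Union>y\<in>f`A. {x\<in>A. f x = y})" by auto
  have "card A = (\<Sum>y\<in>f`A. card {x\<in>A. f x = y})"
    by (subst U, rule card_UN_disjoint) (use fin in auto)
  also have "\<dots> = (\<Sum>y\<in>f`A. c)" using fib by simp
  finally show cA: "card A = c * card (f`A)" by simp
  have cpos: "card A > 0" using fin ne by (simp add: card_gt_0_iff)
  show "map_pmf f (pmf_of_set A) = pmf_of_set (f`A)"
  proof (rule pmf_eqI)
    fix y
    have "pmf (map_pmf f (pmf_of_set A)) y = measure (pmf_of_set A) (f -` {y})"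
      by (simp add: pmf_map)
    also have "\<dots> = card (A \<inter> f -` {y}) / card A"
      using fin ne by (simp add: measure_pmf_of_set)
    finally have eq: "pmf (map_pmf f (pmf_of_set A)) y = card (A \<inter> f -` {y}) / card A" .
    show "pmf (map_pmf f (pmf_of_set A)) y = pmf (pmf_of_set (f`A)) y"
    proof (cases "y \<in> f`A")
      case True
      have "A \<inter> f -` {y} = {x\<in>A. f x = y}" by auto
      then have "card (A \<inter> f -` {y}) = c" using fib[OF True] by simp
      moreover have "c > 0" using cA cpos by (metis gr0I mult_0)
      ultimately show ?thesis using eq True cA fin ne
        by (simp add: pmf_of_set)
    next
      case False
      then have "A \<inter> f -` {y} = {}" by auto
      then show ?thesis using eq False fin ne by (simp add: pmf_of_set)
    qed
  qed
qed

lemma entropy_uniform: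
  assumes "finite S" "S \<noteq> {}"
  shows "shannon_entropy (pmf_of_set S) = log 2 (card S)"
proof -
  have c: "card S > 0" using assms by (simp add: card_gt_0_iff)
  have "shannon_entropy (pmf_of_set S) = (\<Sum>x\<in>S. - (1 / card S) * log 2 (1 / card S))"
    unfolding shannon_entropy_def using assms
    by (intro sum.cong) (auto simp: pmf_of_set)
  also have "\<dots> = card S * (- (1 / card S) * log 2 (1 / card S))" by simp
  also have "\<dots> = log 2 (card S)" using c by (simp add: log_divide)
  finally show ?thesis .
qed

lemma affine_fiber:
  fixes M :: "'a::{field,finite}^'n^'m" and S :: "('a^'n) set"
  assumes S: "vec.subspace S" and x0: "x0 \<in> (\<lambda>v. a+v)`S"
  shows "{x \<in> (\<lambda>v. a+v)`S. M *v x = M *v x0} = (\<lambda>v. x0 + v) ` (S \<inter> {v. M *v v = 0})"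
proof -
  obtain s0 where s0: "s0 \<in> S" "x0 = a + s0" using x0 by auto
  show ?thesis
  proof safe
    fix s assume s: "s \<in> S" "M *v (a + s) = M *v x0"
    have "a + s = x0 + (s - s0)" using s0 by simp
    moreover have "s - s0 \<in> S" using S s s0 vec.subspace_diff by blast
    moreover have "M *v (s - s0) = 0"
    proof -
      have "M *v a + M *v s = M *v a + M *v s0" using s(2) s0(2) by (simp only: matrix_vector_right_distrib)
      then have "M *v s = M *v s0" by simp
      then show ?thesis by (simp only: matrix_vector_mult_diff_distrib diff_self)
    qed
    ultimately show "a + s \<in> (\<lambda>v. x0 + v) ` (S \<inter> {v. M *v v = 0})" by blast
  next
    fix v assume v: "v \<in> S" "M *v v = 0"
    have "x0 + v = a + (s0 + v)" using s0 by simp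
    moreover have "s0 + v \<in> S" using S v s0 vec.subspace_add by blast
    ultimately show "x0 + v \<in> (\<lambda>v. a+v)`S" by blast
    show "M *v (x0 + v) = M *v x0" using v by (simp add: matrix_vector_right_distrib)
  qed
qed

lemma affine_map_uniform:
  fixes M :: "'a::{field,finite}^'n^'m" and S :: "('a^'n) set"
  assumes S: "vec.subspace S"
  shows "card S = card (S \<inter> {v. M *v v = 0}) * card ((\<lambda>x. M *v x) ` (\<lambda>v. a+v)`S)"
    "map_pmf (\<lambda>x. M *v x) (affine_source a S) = pmf_of_set ((\<lambda>x. M *v x) ` (\<lambda>v. a+v)`S)"
proof -
  let ?A = "(\<lambda>v. a+v)`S"
  have fin: "finite ?A" by simp
  have "0 \<in> S" using S by (rule vec.subspace_0)
  then have ne: "?A \<noteq> {}" by blast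
  have fib: "card {x\<in>?A. M *v x = y} = card (S \<inter> {v. M *v v = 0})" if hy: "y \<in> (\<lambda>x. M *v x)`?A" for y
  proof -
    obtain x0 where y: "y = M *v x0" and x0: "x0 \<in> ?A" by (rule imageE[OF hy])
    have e: "{x\<in>?A. M *v x = y} = (\<lambda>v. x0 + v) ` (S \<inter> {v. M *v v = 0})"
      unfolding y by (rule affine_fiber[OF S x0])
    have i: "inj_on (\<lambda>v. x0 + v) (S \<inter> {v. M *v v = 0})" by (rule inj_onI) simp
    show ?thesis unfolding e by (rule card_image[OF i])
  qed
  have "inj_on (\<lambda>v. a + v) S" by (rule inj_onI) simp
  then have cA: "card ?A = card S" by (rule card_image)
  show "card S = card (S \<inter> {v. M *v v = 0}) * card ((\<lambda>x. M *v x) ` ?A)"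
    using map_pmf_uniform_fibers(1)[OF fin ne fib] cA by simp
  show "map_pmf (\<lambda>x. M *v x) (affine_source a S) = pmf_of_set ((\<lambda>x. M *v x) ` ?A)"
    unfolding affine_source_def using map_pmf_uniform_fibers(2)[OF fin ne fib] by simp
qed

lemma null_perp:
  fixes M :: "'a::{field,finite}^'n^'m"
  shows "{y. M *v y = 0} = perp (rows M)"
proof -
  have c: "(M *v y) $ i = dotp y (row i M)" for y i
    by (simp add: matrix_vector_mult_def dotp_def row_def mult.commute)
  have "perp (rows M) = {y. \<forall>i. dotp y (row i M) = 0}" unfolding perp_def rows_def by blast
  then show ?thesis by (auto simp: vec_eq_iff c)
qed

lemma perp_span:
  fixes S :: "('a::{field,finite}^'n) set"
  shows "perp (vec.span S) = perp S"
proof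
  show "perp (vec.span S) \<subseteq> perp S" unfolding perp_def using vec.span_superset by blast
  show "perp S \<subseteq> perp (vec.span S)"
  proof
    fix y assume y: "y \<in> perp S"
    have sub: "vec.subspace {v. dotp y v = 0}"
      unfolding vec.subspace_def dotp_def
      by (auto simp: sum.distrib distrib_left mult.left_commute sum_distrib_left[symmetric])
    have "S \<subseteq> {v. dotp y v = 0}" using y unfolding perp_def by auto
    then have "vec.span S \<subseteq> {v. dotp y v = 0}" using vec.span_minimal sub by blast
    then show "y \<in> perp (vec.span S)" unfolding perp_def by auto
  qed
qed

lemma perp_Un: "perp (A \<union> B) = perp A \<inter> perp B"
  unfolding perp_def by auto

lemma column_eq: "column i (A::'a::field^'n^'m) = A *v axis i 1"
  by (simp add: vec_eq_iff column_def matrix_vector_mult_def axis_def if_distrib if_distribR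
      sum.delta' cong del: if_weak_cong)

lemma span_columns_sub:
  fixes A :: "'a::field^'n^'m"
  shows "vec.span (columns A) \<subseteq> range ((*v) A)"
proof (rule vec.span_minimal)
  show "columns A \<subseteq> range ((*v) A)" unfolding columns_def using column_eq by blast
  show "vec.subspace (range ((*v) A))" by (rule vec.subspace_image[OF vec.subspace_UNIV])
qed

lemma card_range_le:
  fixes A :: "'a::{field,finite}^'n^'m"
  shows "card (range ((*v) A)) \<le> card (vec.span (rows A))"
proof -
  let ?R = "vec.span (rows A)"
  obtain B where B: "B \<subseteq> ?R" "vec.independent B" "?R \<subseteq> vec.span B" "card B = vec.dim ?R"
    using vec.basis_exists by blast
  have finB: "finite B" by simp
  have "\<forall>i. \<exists>u. row i A = (\<Sum>v\<in>B. u v *s v)"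
  proof
    fix i
    have "row i A \<in> ?R" unfolding rows_def by (intro vec.span_base) blast
    then have "row i A \<in> range (\<lambda>u. \<Sum>v\<in>B. u v *s v)"
      using B(3) vec.span_finite[OF finB] by blast
    then show "\<exists>u. row i A = (\<Sum>v\<in>B. u v *s v)" by blast
  qed
  then obtain u where u: "\<And>i. row i A = (\<Sum>v\<in>B. u i v *s v)" by metis
  define F where "F g = (\<chi> i. \<Sum>v\<in>B. u i v * g v)" for g :: "'a^'n \<Rightarrow> 'a"
  have AF: "A *v y = F (restrict (\<lambda>v. dotp y v) B)" for y
  proof -
    have "(A *v y) $ i = F (restrict (\<lambda>v. dotp y v) B) $ i" for i
    proof -
      have "(A *v y) $ i = (\<Sum>j\<in>UNIV. (row i A) $ j * y $ j)"
        by (simp add: matrix_vector_mult_def row_def)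
      also have "\<dots> = (\<Sum>j\<in>UNIV. (\<Sum>v\<in>B. u i v * v $ j) * y $ j)"
        by (simp add: u)
      also have "\<dots> = (\<Sum>v\<in>B. u i v * dotp y v)"
        by (simp add: dotp_def sum_distrib_left sum_distrib_right sum.swap[of _ B] mult_ac)
      also have "\<dots> = F (restrict (\<lambda>v. dotp y v) B) $ i"
        by (simp add: F_def)
      finally show ?thesis .
    qed
    then show ?thesis by (simp add: vec_eq_iff)
  qed
  have "range ((*v) A) \<subseteq> F ` (PiE B (\<lambda>_. UNIV))"
    using AF by auto
  then have "card (range ((*v) A)) \<le> card (F ` (PiE B (\<lambda>_. UNIV)))"
    by (intro card_mono) auto
  also have "\<dots> \<le> card (PiE B (\<lambda>_. UNIV::'a set))" by (rule card_image_le) (simp add: finite_PiE)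
  also have "\<dots> = CARD('a) ^ card B" by (simp add: card_PiE finB)
  also have "\<dots> = card ?R"
    using card_subspace[OF vec.subspace_span[of "rows A"]] B(4) by simp
  finally show ?thesis .
qed

lemma card_range_eq:
  fixes A :: "'a::{field,finite}^'n^'m"
  shows "card (range ((*v) A)) = card (vec.span (rows A))"
proof (rule antisym)
  show "card (range ((*v) A)) \<le> card (vec.span (rows A))" by (rule card_range_le)
  have "card (vec.span (rows A)) \<le> card (range ((*v) (transpose A)))"
    using span_columns_sub[of "transpose A"] by (intro card_mono) auto
  also have "\<dots> \<le> card (vec.span (rows (transpose A)))" by (rule card_range_le)
  also have "\<dots> \<le> card (range ((*v) A))"
    using span_columns_sub[of A] by (intro card_mono) auto
  finally show "card (vec.span (rows A)) \<le> card (range ((*v) A))" .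
qed

lemma card_null_range:
  fixes A :: "'a::{field,finite}^'n^'m"
  shows "card {y. A *v y = 0} * card (range ((*v) A)) = CARD('a) ^ CARD('n)"
proof -
  have "card (UNIV :: ('a^'n) set) = card (UNIV \<inter> {v. A *v v = 0}) * card ((\<lambda>x. A *v x) ` (\<lambda>v. 0+v)`UNIV)"
    by (rule affine_map_uniform(1)[OF vec.subspace_UNIV])
  moreover have "(\<lambda>x. A *v x) ` (\<lambda>v. 0+v)`UNIV = range ((*v) A)" by auto
  ultimately show ?thesis by simp
qed

lemma perp_card:
  fixes W :: "('a::{field,finite}^'n) set"
  assumes W: "vec.subspace W"
  shows "card W * card (perp W) = CARD('a) ^ CARD('n)"
proof -
  obtain B where B: "B \<subseteq> W" "vec.independent B" "W \<subseteq> vec.span B" "card B = vec.dim W"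
    using vec.basis_exists by blast
  have "card B \<le> CARD('n)" using B(4) vec.dim_subset_UNIV[of W] by (simp add: vec.dimension_def card_cart_basis)
  then obtain f where f: "f ` B \<subseteq> (UNIV::'n set)" "inj_on f B"
    using card_le_inj[of B "UNIV::'n set"] by auto
  define A :: "'a^'n^'n" where "A = (\<chi> i. if i \<in> f ` B then the_inv_into B f i else 0)"
  have rowA: "row i A = (if i \<in> f ` B then the_inv_into B f i else 0)" for i
    by (simp add: A_def row_def)
  have "rows A \<subseteq> W"
  proof
    fix r assume "r \<in> rows A"
    then obtain i where r: "r = row i A" unfolding rows_def by blast
    show "r \<in> W"
    proof (cases "i \<in> f ` B")
      case True
      then have "the_inv_into B f i \<in> B" using f(2) by (intro the_inv_into_into) auto
      then show ?thesis using r rowA True B(1) by auto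
    next
      case False
      then show ?thesis using r rowA vec.subspace_0[OF W] by auto
    qed
  qed
  moreover have "B \<subseteq> rows A"
  proof
    fix b assume b: "b \<in> B"
    have "row (f b) A = b" using rowA b f(2) by (simp add: the_inv_into_f_f)
    then show "b \<in> rows A" unfolding rows_def by (metis (mono_tags, lifting) UNIV_I mem_Collect_eq)
  qed
  ultimately have spanA: "vec.span (rows A) = W"
    using W B(3) vec.span_minimal vec.span_mono by blast
  have "perp W = {y. A *v y = 0}"
    using null_perp[of A] perp_span[of "rows A"] spanA by simp
  moreover have "card W = card (range ((*v) A))" using card_range_eq[of A] spanA by simp
  ultimately show ?thesis using card_null_range[of A] by (simp add: mult.commute)
qed

lemma perp_subspace:
  fixes S :: "('a::{field,finite}^'n) set"
  shows "vec.subspace (perp S)"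
  unfolding vec.subspace_def perp_def dotp_def
  by (auto simp: sum.distrib distrib_right mult.assoc sum_distrib_left[symmetric])

lemma card_field_ge2: "CARD('a::{field,finite}) \<ge> 2"
proof -
  have "{0::'a, 1} \<subseteq> UNIV" by simp
  then have "card {0::'a, 1} \<le> CARD('a)" by (intro card_mono) auto
  then show ?thesis by simp
qed

theorem mainTheorem19:
  fixes G :: "'a::{field,finite}^'n^'m"
    and H :: "'a^'n^'h"
    and V :: "('a^'n) set"
    and a b :: "'a^'n"
    and k :: nat
    and k' :: real
  assumes rankG: "rank G = CARD('m)"
    and m_le_n: "CARD('m) \<le> CARD('n)"
    and V_sub: "vec.subspace V"
    and V_dim: "vec.dim V = k"
    and cond: "shannon_entropy (map_pmf (\<lambda>x. G *v x) (affine_source a V))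
                 \<ge> k' * log 2 (real CARD('a))"
    and H_rows: "CARD('h) = CARD('n) - CARD('m)"
    and rankH: "rank H = CARD('n) - CARD('m)"
    and GH: "G ** transpose H = 0"
  shows "shannon_entropy (map_pmf (\<lambda>y. H *v y) (affine_source b (perp V)))
           \<ge> (real CARD('n) - real k + k' - real CARD('m)) * log 2 (real CARD('a))"
proof -
  define q where "q = CARD('a)"
  define n where "n = CARD('n)"
  define m where "m = CARD('m)"
  have q2: "q \<ge> 2" unfolding q_def by (rule card_field_ge2)
  define K where "K = {x. G *v x = 0}"
  have Kperp: "K = perp (vec.span (rows G))" unfolding K_def using null_perp[of G] perp_span[of "rows G"] by simp
  have Ksub: "vec.subspace K" unfolding Kperp by (rule perp_subspace)
  have cRG: "card (vec.span (rows G)) = q ^ m"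
    using card_subspace[OF vec.subspace_span[of "rows G"]] rankG
    unfolding row_rank_def_gen q_def m_def by simp
  have "card (vec.span (rows G)) * card K = q ^ n"
    unfolding Kperp q_def n_def by (rule perp_card[OF vec.subspace_span])
  then have "q ^ m * card K = q ^ m * q ^ (n - m)"
    using cRG m_le_n unfolding m_def n_def by (simp add: power_add[symmetric])
  then have cK: "card K = q ^ (n - m)" using q2 by simp
  have rowsH: "rows H \<subseteq> K"
  proof
    fix r assume "r \<in> rows H"
    then obtain j where r: "r = row j H" unfolding rows_def by blast
    have "(G *v r) $ i = 0" for i
    proof -
      have "(G *v r) $ i = (G ** transpose H) $ i $ j"
        by (simp add: r matrix_vector_mult_def matrix_matrix_mult_def transpose_def row_def)
      then show ?thesis using GH by simp
    qed
    then show "r \<in> K" unfolding K_def by (simp add: vec_eq_iff)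
  qed
  have spH: "vec.span (rows H) = K"
  proof (rule card_subset_eq)
    show "finite K" by simp
    show "vec.span (rows H) \<subseteq> K" using rowsH Ksub vec.span_minimal by blast
    show "card (vec.span (rows H)) = card K"
      using card_subspace[OF vec.subspace_span[of "rows H"]] rankH cK
      unfolding row_rank_def_gen q_def m_def n_def by simp
  qed
  have kerH: "{y. H *v y = 0} = perp K"
    using null_perp[of H] perp_span[of "rows H"] spH by simp
  define S where "S = vec.span (V \<union> K)"
  have Ssub: "vec.subspace S" unfolding S_def by (rule vec.subspace_span)
  have Seq: "S = {x + y |x y. x \<in> V \<and> y \<in> K}"
    unfolding S_def vec.span_Un vec.span_eq_iff[THEN iffD2, OF V_sub] vec.span_eq_iff[THEN iffD2, OF Ksub] ..
  have VKsub: "vec.subspace (V \<inter> K)" using V_sub Ksub by (rule vec.subspace_inter)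
  define d where "d = vec.dim (V \<inter> K)"
  have dims: "vec.dim S + d = k + (n - m)"
  proof -
    have "vec.dim S + d = vec.dim V + vec.dim K"
      unfolding Seq d_def by (rule vec.dim_sums_Int[OF V_sub Ksub])
    moreover have "vec.dim K = n - m"
      using card_subspace[OF Ksub] cK q2 unfolding q_def
      by (metis nat_power_eq_Suc_0_iff not_numeral_le_zero one_le_numeral power_inject_exp less_le_trans one_less_numeral_iff semiring_norm(76) le_less)
    ultimately show ?thesis using V_dim by simp
  qed
  have cS: "card S = q ^ vec.dim S" using card_subspace[OF Ssub] unfolding q_def .
  have cVK: "card (V \<inter> K) = q ^ d" using card_subspace[OF VKsub] unfolding q_def d_def .
  have cV: "card V = q ^ k" using card_subspace[OF V_sub] V_dim unfolding q_def by simp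
  have pV: "card V * card (perp V) = q ^ n" using perp_card[OF V_sub] unfolding q_def n_def .
  have pS: "card S * card (perp S) = q ^ n" using perp_card[OF Ssub] unfolding q_def n_def .
  have perpS: "perp S = perp V \<inter> {y. H *v y = 0}"
    unfolding kerH S_def perp_span perp_Un ..
  define IG where "IG = (\<lambda>x. G *v x) ` (\<lambda>v. a+v) ` V"
  have IG1: "card V = card (V \<inter> K) * card IG"
    unfolding IG_def K_def by (rule affine_map_uniform(1)[OF V_sub])
  have IG2: "map_pmf (\<lambda>x. G *v x) (affine_source a V) = pmf_of_set IG"
    unfolding IG_def by (rule affine_map_uniform(2)[OF V_sub])
  have pVsub: "vec.subspace (perp V)" by (rule perp_subspace)
  define IH where "IH = (\<lambda>x. H *v x) ` (\<lambda>v. b+v) ` perp V"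
  have IH1: "card (perp V) = card (perp S) * card IH"
    unfolding IH_def perpS by (rule affine_map_uniform(1)[OF pVsub])
  have IH2: "map_pmf (\<lambda>y. H *v y) (affine_source b (perp V)) = pmf_of_set IH"
    unfolding IH_def by (rule affine_map_uniform(2)[OF pVsub])
  have neIG: "IG \<noteq> {}" unfolding IG_def using vec.subspace_0[OF V_sub] by blast
  have neIH: "IH \<noteq> {}" unfolding IH_def using vec.subspace_0[OF pVsub] by blast
  have eG: "shannon_entropy (map_pmf (\<lambda>x. G *v x) (affine_source a V)) = log 2 (card IG)"
    unfolding IG2 by (rule entropy_uniform) (simp_all add: neIG)
  have eH: "shannon_entropy (map_pmf (\<lambda>y. H *v y) (affine_source b (perp V))) = log 2 (card IH)"
    unfolding IH2 by (rule entropy_uniform) (simp_all add: neIH)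
  have cIG: "q ^ d * card IG = q ^ k" using IG1 cVK cV by simp
  have pSpos: "card (perp S) > 0"
    using vec.subspace_0[OF perp_subspace[of S]] by (auto simp: card_gt_0_iff)
  have "card IH * q ^ k * card (perp S) = card S * card (perp S)"
    using IH1 pV pS cV by (simp add: mult_ac)
  then have "card IH * q ^ k = card S" using pSpos by (metis mult_right_cancel not_gr0)
  then have "card IH * q ^ k * q ^ d = q ^ k * q ^ (n - m)"
    using cS dims by (simp add: power_add[symmetric] mult_ac add.commute)
  then have cIH: "q ^ d * card IH = q ^ (n - m)" using q2 by (simp add: mult_ac)
  have lq: "log 2 (real q) > 0" using q2 by simp
  have lIG: "log 2 (card IG) = (real k - real d) * log 2 q"
  proof -
    have "log 2 (real (q ^ d) * card IG) = log 2 (real (q ^ k))" using cIG by (metis of_nat_mult)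
    moreover have "card IG > 0" using neIG by (simp add: card_gt_0_iff)
    ultimately show ?thesis using q2 neIG by (simp add: log_mult log_nat_power algebra_simps)
  qed
  have lIH: "log 2 (card IH) = (real (n - m) - real d) * log 2 q"
  proof -
    have "log 2 (real (q ^ d) * card IH) = log 2 (real (q ^ (n - m)))" using cIH by (metis of_nat_mult)
    moreover have "card IH > 0" using neIH by (simp add: card_gt_0_iff)
    ultimately show ?thesis using q2 neIH by (simp add: log_mult log_nat_power algebra_simps)
  qed
  have c1: "k' * log 2 q \<le> (real k - real d) * log 2 q" using cond eG lIG unfolding q_def by simp
  have nm: "real (n - m) = real n - real m" using m_le_n unfolding n_def m_def by simp
  have "(real n - real k + k' - real m) * log 2 q \<le> (real (n - m) - real d) * log 2 q"
    using c1 nm lq by (simp add: algebra_simps)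
  then show ?thesis using eH lIH unfolding q_def n_def m_def by simp
qed

end
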